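(* Let $S$ be a semigroup and let $a,b\in S$ satisfy $a=aba$ and $b=bab$. Then \[(aSa,\star_b)\cong(bSb,\star_a)\cong(aSb,\cdot)\cong(bSa,\cdot),\] and all four are monoids.
   Context: For elements $u,v$ of a semigroup $S$, $uSv=\{uxv: x\in S\}$. For $c\in S$, $\star_c$ denotes the sandwich operation $x\star_c y=xcy$ on $S$. $(T,\star_c)$ denotes the subset $T\subseteq S$ equipped with the operation $\star_c$ (here $T$ is closed under it), and $(T,\cdot)$ denotes $T$ with the original operation of $S$. *)

theory Defs
  imports Main "HOL-Algebra.Group"
begin

definition sandset :: "'a::semigroup_mult \<Rightarrow> 'a \<Rightarrow> 'a set" where
  "sandset u v = {u * x * v | x. True}"

text \<open>The unit field is left unspecified; monoid-ness is expressed existentially below,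
  and isomorphism in HOL-Algebra does not refer to the unit field.\<close>
definition sandstruct :: "'a::semigroup_mult set \<Rightarrow> 'a \<Rightarrow> 'a monoid" where
  "sandstruct T c = \<lparr>carrier = T, mult = (\<lambda>x y. x * c * y), one = undefined\<rparr>"

definition plainstruct :: "'a::semigroup_mult set \<Rightarrow> 'a monoid" where
  "plainstruct T = \<lparr>carrier = T, mult = (\<lambda>x y. x * y), one = undefined\<rparr>"

definition is_monoid :: "'a monoid \<Rightarrow> bool" where
  "is_monoid G \<longleftrightarrow> (\<exists>e. monoid (G\<lparr>one := e\<rparr>))"

end

theory Submission
  imports Defs
begin

lemma iso_by_witness:
  assumes "\<And>x. x \<in> carrier G \<Longrightarrow> f x \<in> carrier H"
    and "\<And>y. y \<in> carrier H \<Longrightarrow> g y \<in> carrier G"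
    and "\<And>x. x \<in> carrier G \<Longrightarrow> g (f x) = x"
    and "\<And>y. y \<in> carrier H \<Longrightarrow> f (g y) = y"
    and "\<And>x y. x \<in> carrier G \<Longrightarrow> y \<in> carrier G \<Longrightarrow> f (x \<otimes>\<^bsub>G\<^esub> y) = f x \<otimes>\<^bsub>H\<^esub> f y"
  shows "G \<cong> H"
proof (rule is_isoI)
  have "bij_betw f (carrier G) (carrier H)"
    by (rule bij_betw_byWitness[where f'=g]) (use assms in auto)
  then show "f \<in> iso G H" using assms unfolding iso_def hom_def by auto
qed

lemma mem_sand: "z \<in> sandset u v \<longleftrightarrow> (\<exists>x. z = u * x * v)"
  unfolding sandset_def by auto

theorem lemma2p3:
  fixes a b :: "'a::semigroup_mult"
  assumes "a = a * b * a" and "b = b * a * b"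
  shows "sandstruct (sandset a a) b \<cong> sandstruct (sandset b b) a
       \<and> sandstruct (sandset b b) a \<cong> plainstruct (sandset a b)
       \<and> plainstruct (sandset a b) \<cong> plainstruct (sandset b a)
       \<and> is_monoid (sandstruct (sandset a a) b)
       \<and> is_monoid (sandstruct (sandset b b) a)
       \<and> is_monoid (plainstruct (sandset a b))
       \<and> is_monoid (plainstruct (sandset b a))"
proof -
  have A1: "a * (b * a) = a" using assms(1) by (simp add: mult.assoc)
  have A2: "a * (b * (a * z)) = a * z" for z using A1 by (metis mult.assoc)
  have B1: "b * (a * b) = b" using assms(2) by (simp add: mult.assoc)
  have B2: "b * (a * (b * z)) = b * z" for z using B1 by (metis mult.assoc)
  note S = mult.assoc A1 A2 B1 B2
  note D = sandstruct_def plainstruct_def mem_sand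
  have i1: "sandstruct (sandset a a) b \<cong> sandstruct (sandset b b) a"
    apply (rule iso_by_witness[where f="\<lambda>x. b*x*b" and g="\<lambda>y. a*y*a"])
        apply (auto simp: D S) apply ((metis S)+)? done
  have i2: "sandstruct (sandset b b) a \<cong> plainstruct (sandset a b)"
    apply (rule iso_by_witness[where f="\<lambda>x. a*x" and g="\<lambda>y. b*y"])
        apply (auto simp: D S) apply ((metis S)+)? done
  have i3: "plainstruct (sandset a b) \<cong> plainstruct (sandset b a)"
    apply (rule iso_by_witness[where f="\<lambda>x. b*x*a" and g="\<lambda>y. a*y*b"])
        apply (auto simp: D S) apply ((metis S)+)? done
  have m1: "is_monoid (sandstruct (sandset a a) b)"
    unfolding is_monoid_def
    apply (rule exI[where x=a], rule monoidI)
        apply (auto simp: D S) apply ((metis S)+)? done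
  have m2: "is_monoid (sandstruct (sandset b b) a)"
    unfolding is_monoid_def
    apply (rule exI[where x=b], rule monoidI)
        apply (auto simp: D S) apply ((metis S)+)? done
  have m3: "is_monoid (plainstruct (sandset a b))"
    unfolding is_monoid_def
    apply (rule exI[where x="a*b"], rule monoidI)
        apply (auto simp: D S) apply ((metis S)+)? done
  have m4: "is_monoid (plainstruct (sandset b a))"
    unfolding is_monoid_def
    apply (rule exI[where x="b*a"], rule monoidI)
        apply (auto simp: D S) apply ((metis S)+)? done
  show ?thesis using i1 i2 i3 m1 m2 m3 m4 by blast
qed

end
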